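(* Let $n\geq 2$ and let $C$ be an all-ones CRC in $G_n$ with covering radius $\rho\geq 2$, $c_1=1$, $c_2=3$, $\mathbf{0}\in C$ and $-e_n\in C$. Then: (1) the intersection of any cap with the $0$-slice contains at most one word of $C$; in particular $C$ contains at most $2(n-1)$ words of type $3100$ lying in the $0$-slice; (2) every word $x$ of type $1100$ with $x_n=0$ lies in $C_2$ and is at distance two from exactly one word $y\in C$ of type $3100$ with $y_n=0$.
   Context: $G_n$: vertex set $\mathbb{Z}^n$, $x\sim y$ iff $\sum_i|x_i-y_i|=1$; $e_i$ the $i$-th unit vector. For a code $C$ with covering radius $\rho$, $C_i=\{v:d(v,C)=i\}$; $C$ is a CRC if for all $i,j$ every vertex of $C_i$ has the same number $\alpha_{ij}$ of neighbours in $C_j$, with $\alpha_{ij}=0$ for $|i-j|>1$; $a_i=\alpha_{ii}$, $c_i=\alpha_{i,i-1}$. $C$ is all-ones if $a_i=1$ for all $i$. The type of a word of weight at most four is the nonincreasing sequence of its four largest absolute entry values; type $1100$: exactly two entries $\pm1$, others $0$; type $3100$: one entry $\pm3$, one entry $\pm1$, others $0$. A cap is one of the sets $\{\varepsilon 3e_i\pm e_j: j\neq i\}$, $i\in\{1,\ldots,n\}$, $\varepsilon\in\{\pm1\}$. The $0$-slice is $\{x: x_n\in\{0,-1\}\}$. *)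

theory Defs
  imports Main
begin

text \<open>Vertices of G_n: functions nat => int supported on the coordinates 1..n.\<close>
definition vtx :: "nat \<Rightarrow> (nat \<Rightarrow> int) set" where
  "vtx n = {x. \<forall>i. (i = 0 \<or> n < i) \<longrightarrow> x i = 0}"

definition unitv :: "nat \<Rightarrow> nat \<Rightarrow> int" where
  "unitv i = (\<lambda>k. if k = i then 1 else 0)"

definition gdist :: "nat \<Rightarrow> (nat \<Rightarrow> int) \<Rightarrow> (nat \<Rightarrow> int) \<Rightarrow> nat" where
  "gdist n x y = nat (\<Sum>i=1..n. \<bar>x i - y i\<bar>)"

definition adj :: "nat \<Rightarrow> (nat \<Rightarrow> int) \<Rightarrow> (nat \<Rightarrow> int) \<Rightarrow> bool" where
  "adj n x y \<longleftrightarrow> gdist n x y = 1"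

definition dcode :: "nat \<Rightarrow> (nat \<Rightarrow> int) set \<Rightarrow> (nat \<Rightarrow> int) \<Rightarrow> nat" where
  "dcode n C v = (LEAST k. \<exists>c\<in>C. gdist n v c = k)"

definition covering_radius :: "nat \<Rightarrow> (nat \<Rightarrow> int) set \<Rightarrow> nat \<Rightarrow> bool" where
  "covering_radius n C \<rho> \<longleftrightarrow> (\<forall>v\<in>vtx n. dcode n C v \<le> \<rho>) \<and> (\<exists>v\<in>vtx n. dcode n C v = \<rho>)"

definition layer :: "nat \<Rightarrow> (nat \<Rightarrow> int) set \<Rightarrow> nat \<Rightarrow> (nat \<Rightarrow> int) set" where
  "layer n C i = {v \<in> vtx n. dcode n C v = i}"

definition CRC :: "nat \<Rightarrow> (nat \<Rightarrow> int) set \<Rightarrow> nat \<Rightarrow> (nat \<Rightarrow> nat \<Rightarrow> nat) \<Rightarrow> bool" where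
  "CRC n C \<rho> \<alpha> \<longleftrightarrow> C \<subseteq> vtx n \<and> C \<noteq> {} \<and> covering_radius n C \<rho> \<and>
     (\<forall>i\<le>\<rho>. \<forall>j\<le>\<rho>. \<forall>v\<in>layer n C i.
        card {w \<in> layer n C j. adj n v w} = \<alpha> i j) \<and>
     (\<forall>i\<le>\<rho>. \<forall>j\<le>\<rho>. (i + 1 < j \<or> j + 1 < i) \<longrightarrow> \<alpha> i j = 0)"

definition all_ones :: "nat \<Rightarrow> (nat \<Rightarrow> nat \<Rightarrow> nat) \<Rightarrow> bool" where
  "all_ones \<rho> \<alpha> \<longleftrightarrow> (\<forall>i\<le>\<rho>. \<alpha> i i = 1)"

definition type1100 :: "nat \<Rightarrow> (nat \<Rightarrow> int) \<Rightarrow> bool" where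
  "type1100 n x \<longleftrightarrow> x \<in> vtx n \<and>
     (\<exists>i j. 1 \<le> i \<and> i \<le> n \<and> 1 \<le> j \<and> j \<le> n \<and> i \<noteq> j \<and>
        \<bar>x i\<bar> = 1 \<and> \<bar>x j\<bar> = 1 \<and> (\<forall>k. k \<noteq> i \<and> k \<noteq> j \<longrightarrow> x k = 0))"

definition type3100 :: "nat \<Rightarrow> (nat \<Rightarrow> int) \<Rightarrow> bool" where
  "type3100 n x \<longleftrightarrow> x \<in> vtx n \<and>
     (\<exists>i j. 1 \<le> i \<and> i \<le> n \<and> 1 \<le> j \<and> j \<le> n \<and> i \<noteq> j \<and>
        \<bar>x i\<bar> = 3 \<and> \<bar>x j\<bar> = 1 \<and> (\<forall>k. k \<noteq> i \<and> k \<noteq> j \<longrightarrow> x k = 0))"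

definition cap :: "nat \<Rightarrow> nat \<Rightarrow> int \<Rightarrow> (nat \<Rightarrow> int) set" where
  "cap n i \<epsilon> = {(\<lambda>k. \<epsilon> * 3 * unitv i k + \<delta> * unitv j k) | j \<delta>.
                     1 \<le> j \<and> j \<le> n \<and> j \<noteq> i \<and> \<delta> \<in> {1, -1}}"

definition slice0 :: "nat \<Rightarrow> (nat \<Rightarrow> int) set" where
  "slice0 n = {x \<in> vtx n. x n \<in> {0, -1}}"

end

theory Submission
  imports Defs "HOL-Library.Function_Algebras"
begin



definition uv :: "nat \<Rightarrow> int \<Rightarrow> nat \<Rightarrow> int" where
  "uv k d = (\<lambda>m. if m = k then d else 0)"

lemma uv_apply[simp]: "uv k d m = (if m = k then d else 0)"
  by (simp add: uv_def)

lemma neq_at: "f a \<noteq> g a \<Longrightarrow> f \<noteq> g" by auto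

lemma gdist_sym: "gdist n x y = gdist n y x"
  unfolding gdist_def by (simp add: abs_minus_commute)

lemma adj_sym: "adj n x y = adj n y x"
  unfolding adj_def by (simp add: gdist_sym)

lemma gdist_step: assumes "k \<in> {1..n}" shows "gdist n x (x + uv k d) = nat \<bar>d\<bar>"
proof -
  have "(\<Sum>m=1..n. \<bar>x m - (x + uv k d) m\<bar>) = (\<Sum>m=1..n. if m = k then \<bar>d\<bar> else 0)"
    by (rule sum.cong) auto
  also have "\<dots> = \<bar>d\<bar>" using assms by simp
  finally show ?thesis unfolding gdist_def by simp
qed

lemma adj_step: "k \<in> {1..n} \<Longrightarrow> \<bar>d\<bar> = 1 \<Longrightarrow> adj n x (x + uv k d)"
  unfolding adj_def by (simp add: gdist_step)

lemma adj_step': "k \<in> {1..n} \<Longrightarrow> \<bar>d\<bar> = 1 \<Longrightarrow> adj n (x + uv k d) x"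
  using adj_step adj_sym by blast

lemma vtx_add: "x \<in> vtx n \<Longrightarrow> k \<in> {1..n} \<Longrightarrow> x + uv k d \<in> vtx n"
  unfolding vtx_def by auto

lemma vtx_uv: "k \<in> {1..n} \<Longrightarrow> uv k d \<in> vtx n"
  unfolding vtx_def by auto

lemma vtx_zero: "0 \<in> vtx n"
  unfolding vtx_def by auto

lemma vtx_diff: assumes "x \<in> vtx n" "y \<in> vtx n" "x k \<noteq> y k" shows "k \<in> {1..n}"
proof (rule ccontr)
  assume "k \<notin> {1..n}" then have "k = 0 \<or> n < k" by auto
  then show False using assms unfolding vtx_def by auto
qed

lemma gdist0: assumes "x \<in> vtx n" "y \<in> vtx n" "gdist n x y = 0" shows "x = y"
proof -
  have S: "(\<Sum>i=1..n. \<bar>x i - y i\<bar>) = 0"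
  proof -
    have "(\<Sum>i=1..n. \<bar>x i - y i\<bar>) \<ge> 0" by (rule sum_nonneg) simp
    moreover have "(\<Sum>i=1..n. \<bar>x i - y i\<bar>) \<le> 0" using assms(3) unfolding gdist_def by simp
    ultimately show ?thesis by linarith
  qed
  have "\<forall>i\<in>{1..n}. \<bar>x i - y i\<bar> = 0"
    using sum_nonneg_eq_0_iff[of "{1..n}" "\<lambda>i. \<bar>x i - y i\<bar>"] S by simp
  then have Z: "\<And>i. i \<in> {1..n} \<Longrightarrow> x i = y i" by simp
  show ?thesis
  proof (rule ext, rule ccontr)
    fix i assume "x i \<noteq> y i"
    then show False using vtx_diff[OF assms(1,2)] Z by blast
  qed
qed

lemma triangle: "gdist n x z \<le> gdist n x y + gdist n y z"
proof -
  have "(\<Sum>i=1..n. \<bar>x i - z i\<bar>) \<le> (\<Sum>i=1..n. \<bar>x i - y i\<bar> + \<bar>y i - z i\<bar>)"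
    by (rule sum_mono) simp
  also have "\<dots> = (\<Sum>i=1..n. \<bar>x i - y i\<bar>) + (\<Sum>i=1..n. \<bar>y i - z i\<bar>)"
    by (simp add: sum.distrib)
  moreover have "(\<Sum>i=1..n. \<bar>x i - y i\<bar>) \<ge> 0" "(\<Sum>i=1..n. \<bar>y i - z i\<bar>) \<ge> 0"
    by (simp_all add: sum_nonneg)
  ultimately show ?thesis unfolding gdist_def by linarith
qed

lemma adj_inv: assumes "x \<in> vtx n" "y \<in> vtx n" "adj n x y"
  shows "\<exists>k\<in>{1..n}. \<exists>d. \<bar>d\<bar> = 1 \<and> y = x + uv k d"
proof -
  let ?f = "\<lambda>i. \<bar>x i - y i\<bar>"
  have S: "sum ?f {1..n} = 1" using assms(3) unfolding adj_def gdist_def by simp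
  have "x \<noteq> y" proof assume "x = y" then show False using S by simp qed
  then obtain k where k: "x k \<noteq> y k" by auto
  have kn: "k \<in> {1..n}" using k assms(1,2) vtx_diff by blast
  have split: "sum ?f {1..n} = ?f k + sum ?f ({1..n} - {k})"
    using kn by (simp add: sum.remove)
  have rest: "sum ?f ({1..n} - {k}) \<ge> 0" by (simp add: sum_nonneg)
  have fk: "?f k \<ge> 1" using k by simp
  have fk1: "?f k = 1" and r0: "sum ?f ({1..n} - {k}) = 0" using S split rest fk by linarith+
  have others: "\<forall>i\<in>{1..n} - {k}. ?f i = 0"
    using sum_nonneg_eq_0_iff[of "{1..n} - {k}" ?f] r0 by simp
  show ?thesis
  proof (intro bexI exI conjI)
    show "\<bar>y k - x k\<bar> = 1" using fk1 by (simp add: abs_minus_commute)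
    show "y = x + uv k (y k - x k)"
    proof (rule ext)
      fix i show "y i = (x + uv k (y k - x k)) i"
      proof (cases "i \<in> {1..n}")
        case True then show ?thesis using others by (cases "i = k") auto
      next
        case False
        then have "i = 0 \<or> n < i" by auto
        moreover have "i \<noteq> k" using kn False by auto
        ultimately show ?thesis using assms(1,2) unfolding vtx_def by auto
      qed
    qed
  qed (fact kn)
qed

lemma midpoint: assumes "x \<in> vtx n" "y \<in> vtx n" "gdist n x y = 2"
  shows "\<exists>w\<in>vtx n. adj n x w \<and> adj n w y"
proof -
  let ?f = "\<lambda>i. \<bar>x i - y i\<bar>"
  have S: "sum ?f {1..n} = 2" using assms(3) unfolding gdist_def by simp
  have "x \<noteq> y" proof assume "x = y" then show False using S by simp qed
  then obtain k where k: "x k \<noteq> y k" by auto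
  have kn: "k \<in> {1..n}" using k assms(1,2) vtx_diff by blast
  define d where "d = sgn (y k - x k)"
  define w where "w = x + uv k d"
  have d1: "\<bar>d\<bar> = 1" using k unfolding d_def by (simp add: abs_sgn_eq)
  let ?g = "\<lambda>i. \<bar>w i - y i\<bar>"
  have gk: "?g k = ?f k - 1" using k unfolding w_def d_def
    by (cases "x k < y k") (auto simp: sgn_if)
  have split: "sum ?f {1..n} = ?f k + sum ?f ({1..n} - {k})"
    using kn by (simp add: sum.remove)
  have split2: "sum ?g {1..n} = ?g k + sum ?g ({1..n} - {k})"
    using kn by (simp add: sum.remove)
  have eq: "sum ?g ({1..n} - {k}) = sum ?f ({1..n} - {k})"
    by (rule sum.cong) (auto simp: w_def)
  have "sum ?g {1..n} = 1" using S split split2 eq gk by linarith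
  then have "adj n w y" unfolding adj_def gdist_def by simp
  moreover have "adj n x w" unfolding w_def using kn d1 by (rule adj_step)
  moreover have "w \<in> vtx n" unfolding w_def using assms(1) kn by (rule vtx_add)
  ultimately show ?thesis by blast
qed

lemma dc_le: "c \<in> C \<Longrightarrow> dcode n C v \<le> gdist n v c"
  unfolding dcode_def by (rule Least_le) blast

lemma dc_ex: "C \<noteq> {} \<Longrightarrow> \<exists>c\<in>C. gdist n v c = dcode n C v"
  unfolding dcode_def by (rule LeastI_ex) blast

lemma dc0: assumes "C \<subseteq> vtx n" "v \<in> vtx n" "C \<noteq> {}" shows "dcode n C v = 0 \<longleftrightarrow> v \<in> C"
proof
  assume "v \<in> C" then show "dcode n C v = 0" using dc_le[of v C n v] by (simp add: gdist_def)
next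
  assume h: "dcode n C v = 0"
  obtain c where "c \<in> C" "gdist n v c = 0" using dc_ex h assms(3) by metis
  then show "v \<in> C" using gdist0 assms by blast
qed

lemma dc_adj: assumes "C \<noteq> {}" "adj n v w" shows "dcode n C v \<le> dcode n C w + 1"
proof -
  obtain c where c: "c \<in> C" "gdist n w c = dcode n C w" using dc_ex assms(1) by blast
  have "dcode n C v \<le> gdist n v c" using dc_le c(1) .
  also have "\<dots> \<le> gdist n v w + gdist n w c" by (rule triangle)
  finally show ?thesis using assms(2) c(2) unfolding adj_def by simp
qed




lemma adjI: "Q = P + uv k d \<Longrightarrow> k \<in> {1..n} \<Longrightarrow> \<bar>d\<bar> = 1 \<Longrightarrow> adj n P Q"
  using adj_step by blast

locale S =
  fixes n \<rho> :: nat and C :: "(nat \<Rightarrow> int) set" and \<alpha> :: "nat \<Rightarrow> nat \<Rightarrow> nat"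
  assumes n2: "n \<ge> 2"
    and crc: "CRC n C \<rho> \<alpha>"
    and ones: "all_ones \<rho> \<alpha>"
    and r2: "\<rho> \<ge> 2"
    and al10: "\<alpha> 1 0 = 1"
    and al21: "\<alpha> 2 1 = 3"
    and z0: "(\<lambda>k. 0) \<in> C"
    and mn: "(\<lambda>k. - unitv n k) \<in> C"
begin

lemma Csub: "C \<subseteq> vtx n" using crc unfolding CRC_def by blast
lemma Cne: "C \<noteq> {}" using z0 by blast
lemma zeroC: "0 \<in> C" using z0 by (simp add: zero_fun_def)
lemma enC: "uv n (-1) \<in> C"
proof -
  have "(\<lambda>k. - unitv n k) = uv n (-1)" by (auto simp: fun_eq_iff unitv_def)
  then show ?thesis using mn by simp
qed
lemma nn: "n \<in> {1..n}" using n2 by auto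

lemma dcz: "v \<in> vtx n \<Longrightarrow> dcode n C v = 0 \<longleftrightarrow> v \<in> C"
  using dc0[OF Csub _ Cne] by blast

lemma layerD: "v \<in> layer n C k \<Longrightarrow> v \<in> vtx n \<and> dcode n C v = k"
  unfolding layer_def by auto
lemma layerI: "v \<in> vtx n \<Longrightarrow> dcode n C v = k \<Longrightarrow> v \<in> layer n C k"
  unfolding layer_def by auto
lemma layer0: "layer n C 0 = C"
  using dcz Csub unfolding layer_def by blast

lemma cnt: "i \<le> \<rho> \<Longrightarrow> j \<le> \<rho> \<Longrightarrow> v \<in> layer n C i \<Longrightarrow> card {w \<in> layer n C j. adj n v w} = \<alpha> i j"
  using crc unfolding CRC_def by blast

lemma card1_eq: "card A = 1 \<Longrightarrow> a \<in> A \<Longrightarrow> b \<in> A \<Longrightarrow> a = b"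
  by (metis card_1_singletonE singletonD)

lemma CN: assumes "y1 \<in> C" "y2 \<in> C" "m \<in> vtx n" "adj n m y1" "adj n m y2" shows "y1 = y2"
proof -
  have g1: "gdist n m y1 = 1" using assms(4) unfolding adj_def .
  have le: "dcode n C m \<le> 1" using dc_le[OF assms(1), of n m] g1 by simp
  have mem1: "y1 \<in> {w \<in> layer n C 0. adj n m w}" using assms(1,4) layer0 by simp
  have mem2: "y2 \<in> {w \<in> layer n C 0. adj n m w}" using assms(2,5) layer0 by simp
  have "card {w \<in> layer n C 0. adj n m w} = 1"
  proof (cases "dcode n C m = 0")
    case True
    then have "m \<in> layer n C 0" using assms(3) layerI by blast
    moreover have "\<alpha> 0 0 = 1" using ones r2 unfolding all_ones_def by simp
    ultimately show ?thesis using cnt[of 0 0 m] by simp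
  next
    case False
    then have "dcode n C m = 1" using le by simp
    then have "m \<in> layer n C 1" using assms(3) layerI by blast
    then show ?thesis using cnt[of 1 0 m] al10 r2 by simp
  qed
  from card1_eq[OF this mem1 mem2] show ?thesis .
qed

lemma layer1I: assumes "v \<in> vtx n" "v \<notin> C" "adj n v c" "c \<in> C" shows "v \<in> layer n C 1"
proof -
  have "dcode n C v \<le> 1" using dc_le[OF assms(4), of n v] assms(3) unfolding adj_def by simp
  moreover have "dcode n C v \<noteq> 0" using dcz[OF assms(1)] assms(2) by simp
  ultimately show ?thesis using assms(1) by (intro layerI) auto
qed

lemma uniq1: assumes "a \<in> layer n C 1" "b \<in> layer n C 1" "v \<in> layer n C 1" "adj n a b" "adj n a v"
  shows "v = b"
proof -
  have "card {w \<in> layer n C 1. adj n a w} = 1" using cnt[of 1 1 a] assms(1) ones r2 unfolding all_ones_def by simp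
  then show ?thesis using assms card1_eq[of "{w \<in> layer n C 1. adj n a w}" v b] by blast
qed

lemma G: assumes "a \<in> layer n C 1" "b \<in> layer n C 1" "adj n a b" "c \<in> C" "adj n a c"
  "v \<in> vtx n" "adj n a v" "v \<noteq> b" "v \<noteq> c" shows "v \<in> layer n C 2"
proof -
  have av: "a \<in> vtx n" "dcode n C a = 1" using layerD[OF assms(1)] by auto
  have "v \<notin> C" using CN[of v c a] assms av by blast
  then have d0: "dcode n C v \<noteq> 0" using dcz[OF assms(6)] by simp
  have d1: "dcode n C v \<noteq> 1"
  proof
    assume "dcode n C v = 1"
    then have "v \<in> layer n C 1" using assms(6) by (intro layerI)
    then show False using uniq1[OF assms(1,2) _ assms(3,7)] assms(8) by blast
  qed
  have "dcode n C v \<le> dcode n C a + 1" using dc_adj[OF Cne] assms(7) adj_sym by blast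
  then show ?thesis using d0 d1 av assms(6) by (intro layerI) auto
qed

lemma mid1: assumes "x \<in> layer n C 2" "y \<in> C" "m \<in> vtx n" "adj n m x" "adj n m y"
  shows "m \<in> layer n C 1"
proof -
  have "dcode n C m \<le> 1" using dc_le[OF assms(2), of n m] assms(5) unfolding adj_def by simp
  moreover have "dcode n C x \<le> dcode n C m + 1" using dc_adj[OF Cne] assms(4) adj_sym by blast
  ultimately show ?thesis using layerD[OF assms(1)] assms(3) by (intro layerI) auto
qed

lemma noadj2: assumes "v \<in> layer n C 2" "y \<in> C" "adj n v y" shows False
proof -
  have "dcode n C v \<le> dcode n C y + 1" using dc_adj[OF Cne] assms(3) by blast
  moreover have "dcode n C y = 0" using dcz assms(2) Csub by blast
  ultimately show False using layerD[OF assms(1)] by simp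
qed

lemma four: assumes "v \<in> layer n C 2"
  "a \<in> layer n C 1" "b \<in> layer n C 1" "c \<in> layer n C 1" "d \<in> layer n C 1"
  "adj n v a" "adj n v b" "adj n v c" "adj n v d"
  "a \<noteq> b" "a \<noteq> c" "a \<noteq> d" "b \<noteq> c" "b \<noteq> d" "c \<noteq> d" shows False
proof -
  let ?A = "{w \<in> layer n C 1. adj n v w}"
  have c3: "card ?A = 3" using cnt[of 2 1 v] assms(1) al21 r2 by simp
  then have "finite ?A" by (intro card_ge_0_finite) simp
  moreover have "{a,b,c,d} \<subseteq> ?A" using assms by auto
  ultimately have "card {a,b,c,d} \<le> 3" using c3 card_mono by metis
  then show False using assms(10-15) by simp
qed

lemma unit_C1: assumes "k \<in> {1..n}" "\<bar>s\<bar> = 1" "\<not> (k = n \<and> s = -1)"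
  shows "uv k s \<in> layer n C 1"
proof -
  have a: "adj n 0 (uv k s)" by (rule adjI[of _ _ k s]) (use assms in auto)
  have b: "adj n 0 (uv n (-1))" by (rule adjI[of _ _ n "-1"]) (use nn in auto)
  have "uv k s \<notin> C"
  proof
    assume "uv k s \<in> C"
    then have "uv k s = uv n (-1)" using CN[OF _ enC vtx_zero a b] by blast
    then have "uv k s k = uv n (-1) k" by simp
    then show False using assms by (auto split: if_splits)
  qed
  then show ?thesis using layer1I[of "uv k s" 0] vtx_uv[OF assms(1)] a adj_sym zeroC by blast
qed

lemma unit_nb: assumes "k \<in> {1..n}" "\<bar>s\<bar> = 1" "y \<in> C" "adj n (uv k s) y" shows "y = 0"
proof -
  have "adj n 0 (uv k s)" by (rule adjI[of _ _ k s]) (use assms in simp_all)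
  then have a: "adj n (uv k s) 0" using adj_sym by blast
  show ?thesis using CN[OF assms(3) zeroC vtx_uv[OF assms(1)] assms(4) a] .
qed

lemma z_C1: assumes "1 \<le> i" "i < n" "\<bar>s\<bar> = 1" shows "uv i s + uv n (-1) \<in> layer n C 1"
proof -
  have i: "i \<in> {1..n}" using assms by auto
  have a: "adj n (uv n (-1)) (uv i s + uv n (-1))" by (rule adjI[of _ _ i s]) (use assms i in \<open>auto simp: add.commute\<close>)
  have b: "adj n (uv n (-1)) 0" by (rule adjI[of _ _ n 1]) (use nn in \<open>auto simp: fun_eq_iff\<close>)
  have v: "uv i s + uv n (-1) \<in> vtx n" by (rule vtx_add[OF vtx_uv[OF i] nn])
  have "uv i s + uv n (-1) \<notin> C"
  proof
    assume "uv i s + uv n (-1) \<in> C"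
    then have "uv i s + uv n (-1) = 0" using CN[OF _ zeroC vtx_uv[OF nn] a b] by blast
    then have "(uv i s + uv n (-1)) i = 0 i" by simp
    then show False using assms by auto
  qed
  then show ?thesis using layer1I[OF v _ _ enC] a adj_sym by blast
qed

lemma FactA: assumes "1 \<le> i" "i < n" "\<bar>s\<bar> = 1" "v \<in> vtx n" "adj n (uv i s) v"
  "v \<noteq> 0" "v \<noteq> uv i s + uv n (-1)" shows "v \<in> layer n C 2"
proof -
  have i: "i \<in> {1..n}" using assms by auto
  show ?thesis
  proof (rule G[OF unit_C1[OF i assms(3)] z_C1[OF assms(1-3)] _ zeroC _ assms(4,5,7,6)])
    show "\<not> (i = n \<and> s = - 1)" using assms by auto
    show "adj n (uv i s) (uv i s + uv n (- 1))" by (rule adjI[of _ _ n "-1"]) (use nn in auto)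
    have "adj n 0 (uv i s)" by (rule adjI[of _ _ i s]) (use assms i in simp_all)
    then show "adj n (uv i s) 0" using adj_sym by blast
  qed
qed

lemma FactA': assumes "1 \<le> i" "i < n" "\<bar>s\<bar> = 1" "v \<in> vtx n" "adj n (uv i s + uv n (-1)) v"
  "v \<noteq> uv n (-1)" "v \<noteq> uv i s" shows "v \<in> layer n C 2"
proof -
  have i: "i \<in> {1..n}" using assms by auto
  show ?thesis
  proof (rule G[OF z_C1[OF assms(1-3)] unit_C1[OF i assms(3)] _ enC _ assms(4,5,7,6)])
    show "\<not> (i = n \<and> s = - 1)" using assms by auto
    show "adj n (uv i s + uv n (- 1)) (uv i s)"
      using adjI[of "uv i s + uv n (- 1)" "uv i s" n "-1" n] nn adj_sym by auto
    show "adj n (uv i s + uv n (- 1)) (uv n (-1))"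
      using adjI[of "uv i s + uv n (- 1)" "uv n (-1)" i s n] i assms adj_sym by (auto simp: add.commute)
  qed
qed

end



context S begin

lemma vtxI3: "i \<in> {1..n} \<Longrightarrow> j \<in> {1..n} \<Longrightarrow> uv i a + uv j b \<in> vtx n"
  by (rule vtx_add[OF vtx_uv])

lemma K: assumes i: "1 \<le> i" "i < n" and j: "1 \<le> j" "j < n" and ij: "i \<noteq> j"
  and s: "\<bar>s\<bar> = 1" and t: "\<bar>t\<bar> = 1"
  and k: "k \<in> {1..n}" and sg: "\<bar>\<sigma>\<bar> = 1" and l: "l \<in> {1..n}" and ta: "\<bar>\<tau>\<bar> = 1"
  and w: "w = uv i s + uv j t + uv k \<sigma>" and y: "y = w + uv l \<tau>" and yC: "y \<in> C"
  and wne1: "w \<noteq> uv i s" and wne2: "w \<noteq> uv j t"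
  shows "y = uv i (3*s) + uv j t \<or> y = uv i s + uv j (3*t)"
proof -
  define x where "x = uv i s + uv j t"
  have iI: "i \<in> {1..n}" and jI: "j \<in> {1..n}" using i j by auto
  have xv: "x \<in> vtx n" unfolding x_def using iI jI by (rule vtxI3)
  have wx: "w = x + uv k \<sigma>" using w x_def by simp
  have wv: "w \<in> vtx n" unfolding wx by (rule vtx_add[OF xv k])
  have xL2: "x \<in> layer n C 2"
  proof (rule FactA[OF i s xv])
    show "adj n (uv i s) x" unfolding x_def by (rule adjI[of _ _ j t]) (use jI t in simp_all)
    show "x \<noteq> 0" by (rule neq_at[of _ j]) (use ij t x_def in auto)
    show "x \<noteq> uv i s + uv n (-1)" by (rule neq_at[of _ n]) (use i j x_def in auto)
  qed
  have isL1: "uv i s \<in> layer n C 1" by (rule unit_C1) (use iI s i in auto)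
  have jtL1: "uv j t \<in> layer n C 1" by (rule unit_C1) (use jI t j in auto)
  have adjxis: "adj n x (uv i s)"
    using adjI[of x "uv i s" j t n] jI t adj_sym x_def by simp
  have adjxjt: "adj n x (uv j t)"
    using adjI[of x "uv j t" i s n] iI s adj_sym x_def by (simp add: add.commute)
  have adjxw: "adj n x w" by (rule adjI[OF wx k sg])
  have adjwy: "adj n w y" by (rule adjI[OF y l ta])
  have wL1: "w \<in> layer n C 1" by (rule mid1[OF xL2 yC wv]) (use adjxw adjwy adj_sym in auto)
  have ne_isjt: "uv i s \<noteq> uv j t" by (rule neq_at[of _ i]) (use ij s in auto)
  have xnC: "x \<notin> C" using xL2 layerD dcz by fastforce
  show ?thesis
  proof (cases "l = k")
    case False
    define m2 where "m2 = x + uv l \<tau>"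
    have m2v: "m2 \<in> vtx n" unfolding m2_def by (rule vtx_add[OF xv l])
    have ym2: "y = m2 + uv k \<sigma>" unfolding y wx m2_def by (simp add: algebra_simps)
    have adjm2x: "adj n m2 x" using adjI[OF m2_def l ta] adj_sym by blast
    have adjm2y: "adj n m2 y" by (rule adjI[OF ym2 k sg])
    have m2L1: "m2 \<in> layer n C 1" by (rule mid1[OF xL2 yC m2v adjm2x adjm2y])
    have m2w: "m2 \<noteq> w" by (rule neq_at[of _ k]) (use False sg m2_def wx in auto)
    have m2is: "m2 \<noteq> uv i s"
    proof
      assume h: "m2 = uv i s"
      have "adj n (uv i s) y" using adjm2y h by simp
      then have "y = 0" using unit_nb[OF iI s yC] by blast
      then have "uv i s + uv k \<sigma> = 0" using ym2 h by simp
      then have "uv k \<sigma> = - uv i s" by (simp add: add_eq_0_iff)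
      then have "w = uv j t" unfolding wx x_def by (simp add: algebra_simps)
      then show False using wne2 by simp
    qed
    have m2jt: "m2 \<noteq> uv j t"
    proof
      assume h: "m2 = uv j t"
      have "adj n (uv j t) y" using adjm2y h by simp
      then have "y = 0" using unit_nb[OF jI t yC] by blast
      then have "uv j t + uv k \<sigma> = 0" using ym2 h by simp
      then have "uv k \<sigma> = - uv j t" by (simp add: add_eq_0_iff)
      then have "w = uv i s" unfolding wx x_def by (simp add: algebra_simps)
      then show False using wne1 by simp
    qed
    show ?thesis
      using four[OF xL2 isL1 jtL1 wL1 m2L1 adjxis adjxjt adjxw _ ne_isjt] adjm2x adj_sym
        wne1 wne2 m2is m2jt m2w by metis
  next
    case True
    then have lk: "l = k" .
    show ?thesis
    proof (cases "\<tau> = \<sigma>")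
      case False
      then have "\<tau> = - \<sigma>" using sg ta by auto
      then have "y = x" unfolding y wx using lk by (auto simp: fun_eq_iff)
      then show ?thesis using yC xnC by simp
    next
      case True
      have yx: "y = x + uv k (2*\<sigma>)" unfolding y wx using lk True by (auto simp: fun_eq_iff)
      consider "k = i" | "k = j" | "k \<noteq> i" "k \<noteq> j" by blast
      then show ?thesis
      proof cases
        case 1
        show ?thesis
        proof (cases "\<sigma> = s")
          case True then show ?thesis using yx 1 unfolding x_def by (auto simp: fun_eq_iff)
        next
          case False
          then have "\<sigma> = - s" using s sg by auto
          then have "w = uv j t" unfolding wx x_def using 1 by (auto simp: fun_eq_iff)
          then show ?thesis using wne2 by simp
        qed
      next
        case 2
        show ?thesis
        proof (cases "\<sigma> = t")
          case True then show ?thesis using yx 2 ij unfolding x_def by (auto simp: fun_eq_iff)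
        next
          case False
          then have "\<sigma> = - t" using t sg by auto
          then have "w = uv i s" unfolding wx x_def using 2 by (auto simp: fun_eq_iff)
          then show ?thesis using wne1 by simp
        qed
      next
        case 3
        show ?thesis
        proof (cases "k = n \<and> \<sigma> = -1")
          case True
          define v where "v = uv i s + uv n (-2)"
          have vv: "v \<in> vtx n" unfolding v_def using iI nn by (rule vtxI3)
          have vL2: "v \<in> layer n C 2"
          proof (rule FactA'[OF i s vv])
            show "adj n (uv i s + uv n (-1)) v"
              by (rule adjI[of _ _ n "-1"]) (use nn v_def in \<open>auto simp: fun_eq_iff\<close>)
            show "v \<noteq> uv n (-1)" by (rule neq_at[of _ i]) (use i s v_def in auto)
            show "v \<noteq> uv i s" by (rule neq_at[of _ n]) (use i v_def in auto)
          qed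
          have "adj n v y"
            by (rule adjI[of _ _ j t]) (use jI t True yx x_def v_def 3 in \<open>auto simp: fun_eq_iff\<close>)
          then show ?thesis using noadj2[OF vL2 yC] by blast
        next
          case False
          define x' where "x' = uv i s + uv k \<sigma>"
          define q where "q = uv i s + uv k (2*\<sigma>)"
          have x'v: "x' \<in> vtx n" unfolding x'_def using iI k by (rule vtxI3)
          have qv: "q \<in> vtx n" unfolding q_def using iI k by (rule vtxI3)
          have x'L2: "x' \<in> layer n C 2"
          proof (rule FactA[OF i s x'v])
            show "adj n (uv i s) x'" unfolding x'_def by (rule adjI[of _ _ k \<sigma>]) (use k sg in simp_all)
            show "x' \<noteq> 0" by (rule neq_at[of _ i]) (use 3 s x'_def in auto)
            show "x' \<noteq> uv i s + uv n (-1)"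
            proof (cases "k = n")
              case True then show ?thesis using False
                by (intro neq_at[of _ n]) (use i x'_def in auto)
            next
              case kn: False then show ?thesis
                by (intro neq_at[of _ k]) (use 3 sg x'_def in auto)
            qed
          qed
          have kL1: "uv k \<sigma> \<in> layer n C 1" by (rule unit_C1[OF k sg False])
          have a1: "adj n x' (uv i s)"
            using adjI[of x' "uv i s" k \<sigma> n] k sg adj_sym x'_def by simp
          have a2: "adj n x' (uv k \<sigma>)"
            using adjI[of x' "uv k \<sigma>" i s n] iI s adj_sym x'_def by (simp add: add.commute)
          have a3: "adj n x' w" by (rule adjI[of _ _ j t]) (use jI t wx x_def x'_def in \<open>simp_all add: algebra_simps\<close>)
          have a4: "adj n x' q" by (rule adjI[of _ _ k \<sigma>]) (use k sg q_def x'_def in \<open>auto simp: fun_eq_iff\<close>)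
          have a5: "adj n q y" by (rule adjI[of _ _ j t]) (use jI t yx q_def x_def in \<open>auto simp: fun_eq_iff\<close>)
          have qL1: "q \<in> layer n C 1" by (rule mid1[OF x'L2 yC qv]) (use a4 a5 adj_sym in auto)
          have d1: "uv i s \<noteq> uv k \<sigma>" by (rule neq_at[of _ i]) (use 3 s in auto)
          have d2: "uv i s \<noteq> w" using wne1 by simp
          have d3: "uv i s \<noteq> q" by (rule neq_at[of _ k]) (use 3 sg q_def in auto)
          have d4: "uv k \<sigma> \<noteq> w" by (rule neq_at[of _ i]) (use 3 s ij wx x_def in auto)
          have d5: "uv k \<sigma> \<noteq> q" by (rule neq_at[of _ i]) (use 3 s q_def in auto)
          have d6: "w \<noteq> q" by (rule neq_at[of _ j]) (use 3 t ij wx x_def q_def in auto)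
          show ?thesis using four[OF x'L2 isL1 kL1 wL1 qL1 a1 a2 a3 a4 d1 d2 d3 d4 d5 d6] by blast
        qed
      qed
    qed
  qed
qed

end



context S begin

lemma card_le1: assumes "\<And>a b. a \<in> A \<Longrightarrow> b \<in> A \<Longrightarrow> a = b" shows "card A \<le> 1"
proof (cases "finite A")
  case True then show ?thesis using card_le_Suc0_iff_eq[OF True] assms by auto
qed simp

lemma cap_elem: assumes "a \<in> cap n i \<epsilon>" "i \<in> {1..n}" "\<epsilon> \<in> {1, -1}"
  shows "adj n (uv i (3*\<epsilon>)) a"
proof -
  obtain j \<delta> where a: "a = (\<lambda>k. \<epsilon> * 3 * unitv i k + \<delta> * unitv j k)" and
    jd: "1 \<le> j" "j \<le> n" "j \<noteq> i" "\<delta> \<in> {1, -1}"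
    using assms(1) unfolding cap_def by blast
  show ?thesis
  proof (rule adjI[of _ _ j \<delta>])
    show "a = uv i (3 * \<epsilon>) + uv j \<delta>" unfolding a by (auto simp: fun_eq_iff unitv_def)
  qed (use jd in auto)
qed

lemma part1: assumes "i \<in> {1..n}" "\<epsilon> \<in> {1, -1}"
  shows "card (C \<inter> cap n i \<epsilon> \<inter> slice0 n) \<le> 1"
proof (rule card_le1)
  fix a b assume "a \<in> C \<inter> cap n i \<epsilon> \<inter> slice0 n" "b \<in> C \<inter> cap n i \<epsilon> \<inter> slice0 n"
  then have ab: "a \<in> C" "b \<in> C" "a \<in> cap n i \<epsilon>" "b \<in> cap n i \<epsilon>" by simp_all
  show "a = b" by (rule CN[OF ab(1,2) vtx_uv[OF assms(1)] cap_elem[OF ab(3) assms] cap_elem[OF ab(4) assms]])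
qed

lemma cap_finite: "finite (cap n i \<epsilon>)"
proof -
  have "cap n i \<epsilon> \<subseteq> (\<lambda>(j, \<delta>). (\<lambda>k. \<epsilon> * 3 * unitv i k + \<delta> * unitv j k)) ` ({1..n} \<times> {1, -1})"
  proof
    fix a assume "a \<in> cap n i \<epsilon>"
    then obtain j \<delta> where a: "a = (\<lambda>k. \<epsilon> * 3 * unitv i k + \<delta> * unitv j k)" and
      jd: "1 \<le> j" "j \<le> n" "j \<noteq> i" "\<delta> \<in> {1, -1}"
      unfolding cap_def by blast
    show "a \<in> (\<lambda>(j, \<delta>). (\<lambda>k. \<epsilon> * 3 * unitv i k + \<delta> * unitv j k)) ` ({1..n} \<times> {1, -1})"
      by (rule image_eqI[of _ _ "(j, \<delta>)"]) (use a jd in simp_all)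
  qed
  then show ?thesis by (rule finite_subset) simp
qed

lemma t3100_mem: assumes "y \<in> C" "type3100 n y" "y \<in> slice0 n"
  shows "\<exists>p\<in>{1..n-1} \<times> {1, -1}. y \<in> C \<inter> cap n (fst p) (snd p) \<inter> slice0 n"
proof -
  obtain p q where pq: "1 \<le> p" "p \<le> n" "1 \<le> q" "q \<le> n" "p \<noteq> q" "\<bar>y p\<bar> = 3" "\<bar>y q\<bar> = 1"
    and z: "\<And>k. k \<noteq> p \<and> k \<noteq> q \<Longrightarrow> y k = 0"
    using assms(2) unfolding type3100_def by blast
  have yn: "y n = 0 \<or> y n = -1" using assms(3) unfolding slice0_def by auto
  have pn: "p \<noteq> n" using yn pq by auto
  define \<epsilon> where "\<epsilon> = sgn (y p)"
  have e1: "\<epsilon> \<in> {1, -1}" and yp: "y p = 3 * \<epsilon>" using pq(6) unfolding \<epsilon>_def by (auto simp: sgn_if)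
  define \<delta> where "\<delta> = y q"
  have yfun: "y = uv p (3*\<epsilon>) + uv q \<delta>"
  proof (rule ext)
    fix k show "y k = (uv p (3*\<epsilon>) + uv q \<delta>) k" using yp z[of k] pq \<delta>_def by auto
  qed
  have d1: "\<bar>\<delta>\<bar> = 1" using pq(7) \<delta>_def by simp
  have qn: "q \<noteq> n"
  proof
    assume qn: "q = n"
    then have yqn: "\<delta> = -1" using yn pq(7) \<delta>_def by auto
    have pI: "1 \<le> p" "p < n" using pq pn by auto
    have es: "\<bar>\<epsilon>\<bar> = 1" using e1 by auto
    define v where "v = uv p (2*\<epsilon>) + uv n (-1)"
    have vv: "v \<in> vtx n" unfolding v_def using pq nn by (intro vtxI3) auto
    have vL2: "v \<in> layer n C 2"
    proof (rule FactA'[OF pI es vv])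
      show "adj n (uv p \<epsilon> + uv n (-1)) v"
        by (rule adjI[of _ _ p \<epsilon>]) (use pq es v_def in \<open>auto simp: fun_eq_iff\<close>)
      show "v \<noteq> uv n (-1)" by (rule neq_at[of _ p]) (use pn es v_def in auto)
      show "v \<noteq> uv p \<epsilon>" by (rule neq_at[of _ n]) (use pn v_def in auto)
    qed
    have "adj n v y"
      by (rule adjI[of _ _ p \<epsilon>]) (use pq es v_def yfun qn yqn in \<open>auto simp: fun_eq_iff\<close>)
    then show False using noadj2[OF vL2 assms(1)] by blast
  qed
  have "y \<in> cap n p \<epsilon>"
    unfolding cap_def
  proof (intro CollectI exI conjI)
    show "y = (\<lambda>k. \<epsilon> * 3 * unitv p k + \<delta> * unitv q k)" using yfun by (auto simp: fun_eq_iff unitv_def)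
    show "\<delta> \<in> {1, -1}" using d1 by auto
  qed (use pq in auto)
  moreover have "(p, \<epsilon>) \<in> {1..n-1} \<times> {1, -1}" using pq pn e1 by auto
  ultimately show ?thesis using assms(1,3) by (intro bexI[of _ "(p, \<epsilon>)"]) simp_all
qed

lemma part1b: "card {x \<in> C. type3100 n x \<and> x \<in> slice0 n} \<le> 2 * (n - 1)"
proof -
  let ?I = "{1..n-1} \<times> {1::int, -1}"
  let ?A = "\<lambda>p. C \<inter> cap n (fst p) (snd p) \<inter> slice0 n"
  have sub: "{x \<in> C. type3100 n x \<and> x \<in> slice0 n} \<subseteq> (\<Union>p\<in>?I. ?A p)"
  proof
    fix x assume "x \<in> {x \<in> C. type3100 n x \<and> x \<in> slice0 n}"
    then have h: "x \<in> C" "type3100 n x" "x \<in> slice0 n" by simp_all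
    obtain p where "p \<in> ?I" "x \<in> ?A p" using t3100_mem[OF h] by blast
    then show "x \<in> (\<Union>p\<in>?I. ?A p)" by (rule UN_I)
  qed
  have fin: "finite (\<Union>p\<in>?I. ?A p)"
  proof (rule finite_UN_I)
    show "finite ?I" by simp
    fix p show "finite (?A p)" by (rule finite_subset[OF _ cap_finite]) (rule Int_lower2[THEN subset_trans[OF Int_lower1]])
  qed
  have "card {x \<in> C. type3100 n x \<and> x \<in> slice0 n} \<le> card (\<Union>p\<in>?I. ?A p)"
    by (rule card_mono[OF fin sub])
  also have "\<dots> \<le> (\<Sum>p\<in>?I. card (?A p))" by (rule card_UN_le) simp
  also have "\<dots> \<le> (\<Sum>p\<in>?I. 1)"
  proof (rule sum_mono)
    fix p assume "p \<in> ?I"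
    then show "card (?A p) \<le> 1" by (intro part1) auto
  qed
  also have "\<dots> = 2 * (n - 1)" by simp
  finally show ?thesis .
qed

end



context S begin

lemma part2: assumes x1: "type1100 n x" and xn: "x n = 0"
  shows "x \<in> layer n C 2 \<and> (\<exists>!y. y \<in> C \<and> type3100 n y \<and> y n = 0 \<and> gdist n x y = 2)"
proof -
  obtain i j where ij0: "1 \<le> i" "i \<le> n" "1 \<le> j" "j \<le> n" "i \<noteq> j" "\<bar>x i\<bar> = 1" "\<bar>x j\<bar> = 1"
    and z: "\<And>k. k \<noteq> i \<and> k \<noteq> j \<Longrightarrow> x k = 0" and xv: "x \<in> vtx n"
    using x1 unfolding type1100_def by blast
  define s where "s = x i"
  define t where "t = x j"
  have s: "\<bar>s\<bar> = 1" and t: "\<bar>t\<bar> = 1" using ij0 s_def t_def by simp_all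
  have "i \<noteq> n" proof assume "i = n" then show False using ij0 xn by simp qed
  then have i: "1 \<le> i" "i < n" using ij0 by auto
  have "j \<noteq> n" proof assume "j = n" then show False using ij0 xn by simp qed
  then have j: "1 \<le> j" "j < n" using ij0 by auto
  have ij: "i \<noteq> j" using ij0 by simp
  have iI: "i \<in> {1..n}" and jI: "j \<in> {1..n}" using i j by auto
  have xeq: "x = uv i s + uv j t"
  proof (rule ext)
    fix k show "x k = (uv i s + uv j t) k" using z[of k] s_def t_def ij by auto
  qed
  have xL2: "x \<in> layer n C 2"
  proof (rule FactA[OF i s xv])
    show "adj n (uv i s) x" by (rule adjI[of _ _ j t]) (use jI t xeq in simp_all)
    show "x \<noteq> 0" by (rule neq_at[of _ j]) (use ij t xeq in auto)
    show "x \<noteq> uv i s + uv n (-1)" by (rule neq_at[of _ n]) (use i j xeq in auto)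
  qed
  have isL1: "uv i s \<in> layer n C 1" by (rule unit_C1) (use iI s i in auto)
  have jtL1: "uv j t \<in> layer n C 1" by (rule unit_C1) (use jI t j in auto)
  have adjxis: "adj n x (uv i s)"
    using adjI[of x "uv i s" j t n] jI t adj_sym xeq by simp
  have adjxjt: "adj n x (uv j t)"
    using adjI[of x "uv j t" i s n] iI s adj_sym xeq by (simp add: add.commute)
  have ne_isjt: "uv i s \<noteq> uv j t" by (rule neq_at[of _ i]) (use ij s in auto)
  define A where "A = uv i (3*s) + uv j t"
  define B where "B = uv i s + uv j (3*t)"
  have charac: "y = A \<or> y = B" if yC: "y \<in> C" and wv: "w \<in> vtx n" and xw: "adj n x w"
    and wy: "adj n w y" and w1: "w \<noteq> uv i s" and w2: "w \<noteq> uv j t" for y w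
  proof -
    obtain k \<sigma> where k: "k \<in> {1..n}" "\<bar>\<sigma>\<bar> = 1" and wk: "w = x + uv k \<sigma>"
      using adj_inv[OF xv wv xw] by blast
    have yv: "y \<in> vtx n" using yC Csub by blast
    obtain l \<tau> where l: "l \<in> {1..n}" "\<bar>\<tau>\<bar> = 1" and yl: "y = w + uv l \<tau>"
      using adj_inv[OF wv yv wy] by blast
    have "w = uv i s + uv j t + uv k \<sigma>" using wk xeq by simp
    from K[OF i j ij s t k l this yl yC w1 w2] show ?thesis unfolding A_def B_def .
  qed
  have notboth: "\<not> (A \<in> C \<and> B \<in> C)"
  proof
    assume AB: "A \<in> C \<and> B \<in> C"
    define a1 where "a1 = x + uv i s"
    define b1 where "b1 = x + uv j t"
    have a1v: "a1 \<in> vtx n" unfolding a1_def by (rule vtx_add[OF xv iI])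
    have b1v: "b1 \<in> vtx n" unfolding b1_def by (rule vtx_add[OF xv jI])
    have xa1: "adj n x a1" unfolding a1_def by (rule adjI[OF refl iI s])
    have xb1: "adj n x b1" unfolding b1_def by (rule adjI[OF refl jI t])
    have a1A: "adj n a1 A" by (rule adjI[of _ _ i s]) (use iI s a1_def A_def xeq in \<open>auto simp: fun_eq_iff\<close>)
    have b1B: "adj n b1 B" by (rule adjI[of _ _ j t]) (use jI t b1_def B_def xeq in \<open>auto simp: fun_eq_iff\<close>)
    have a1L: "a1 \<in> layer n C 1" by (rule mid1[OF xL2 _ a1v _ a1A]) (use AB xa1 adj_sym in auto)
    have b1L: "b1 \<in> layer n C 1" by (rule mid1[OF xL2 _ b1v _ b1B]) (use AB xb1 adj_sym in auto)
    have d2: "uv i s \<noteq> a1" by (rule neq_at[of _ i]) (use ij s a1_def xeq in auto)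
    have d3: "uv i s \<noteq> b1" by (rule neq_at[of _ j]) (use ij t b1_def xeq in auto)
    have d4: "uv j t \<noteq> a1" by (rule neq_at[of _ i]) (use ij s a1_def xeq in auto)
    have d5: "uv j t \<noteq> b1" by (rule neq_at[of _ j]) (use ij t b1_def xeq in auto)
    have d6: "a1 \<noteq> b1" by (rule neq_at[of _ i]) (use ij s a1_def b1_def xeq in auto)
    show False by (rule four[OF xL2 isL1 jtL1 a1L b1L adjxis adjxjt xa1 xb1 ne_isjt d2 d3 d4 d5 d6])
  qed
  have AB_ne: "A \<noteq> B" by (rule neq_at[of _ i]) (use ij s A_def B_def in auto)
  have PA: "type3100 n A \<and> A n = 0 \<and> gdist n x A = 2"
  proof (intro conjI)
    show "type3100 n A" unfolding type3100_def
    proof (intro conjI exI)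
      show "A \<in> vtx n" unfolding A_def using iI jI by (rule vtxI3)
    qed (use i j ij s t A_def in auto)
    show "A n = 0" using i j A_def by auto
    have "A = x + uv i (2*s)" using xeq A_def by (auto simp: fun_eq_iff)
    then show "gdist n x A = 2" using gdist_step[OF iI, of x "2*s"] s by simp
  qed
  have PB: "type3100 n B \<and> B n = 0 \<and> gdist n x B = 2"
  proof (intro conjI)
    show "type3100 n B" unfolding type3100_def
    proof (rule conjI[OF _ exI[of _ j, OF exI[of _ i]]])
      show "B \<in> vtx n" unfolding B_def using iI jI by (rule vtxI3)
    qed (use i j ij s t B_def in auto)
    show "B n = 0" using i j B_def by auto
    have "B = x + uv j (2*t)" using xeq B_def by (auto simp: fun_eq_iff)
    then show "gdist n x B = 2" using gdist_step[OF jI, of x "2*t"] t by simp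
  qed
  have inAB: "y = A \<or> y = B" if yC: "y \<in> C" and y3: "type3100 n y" and yd: "gdist n x y = 2" for y
  proof -
    have yv: "y \<in> vtx n" using yC Csub by blast
    obtain w where wv: "w \<in> vtx n" and xw: "adj n x w" and wy: "adj n w y"
      using midpoint[OF xv yv yd] by blast
    have y0: "y \<noteq> 0"
    proof
      assume "y = 0" then show False using y3 unfolding type3100_def by auto
    qed
    have w1: "w \<noteq> uv i s"
    proof
      assume "w = uv i s" then have "y = 0" using unit_nb[OF iI s yC] wy by blast
      then show False using y0 by simp
    qed
    have w2: "w \<noteq> uv j t"
    proof
      assume "w = uv j t" then have "y = 0" using unit_nb[OF jI t yC] wy by blast
      then show False using y0 by simp
    qed
    show ?thesis by (rule charac[OF yC wv xw wy w1 w2])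
  qed
  let ?N = "{w \<in> layer n C 1. adj n x w}"
  have cN: "card ?N = 3" using cnt[of 2 1 x] xL2 al21 r2 by simp
  have "\<exists>w. w \<in> ?N \<and> w \<noteq> uv i s \<and> w \<noteq> uv j t"
  proof (rule ccontr)
    assume "\<not> ?thesis"
    then have "?N \<subseteq> {uv i s, uv j t}" by blast
    then have "card ?N \<le> card {uv i s, uv j t}" by (rule card_mono[rotated]) simp
    also have "\<dots> \<le> 2" by (simp add: card_insert_if)
    finally show False using cN by simp
  qed
  then obtain w where wN: "w \<in> ?N" and w1: "w \<noteq> uv i s" and w2: "w \<noteq> uv j t" by blast
  have wL1: "w \<in> layer n C 1" and xw: "adj n x w" using wN by simp_all
  have wv: "w \<in> vtx n" using layerD[OF wL1] by simp
  have cw: "card {y \<in> layer n C 0. adj n w y} = 1" using cnt[of 1 0 w] wL1 al10 r2 by simp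
  have "{y \<in> layer n C 0. adj n w y} \<noteq> {}"
  proof
    assume h: "{y \<in> layer n C 0. adj n w y} = {}"
    show False using cw unfolding h by simp
  qed
  then obtain y0 where "y0 \<in> {y \<in> layer n C 0. adj n w y}" by blast
  then have y0C: "y0 \<in> C" and wy0: "adj n w y0" using layer0 by simp_all
  have y0AB: "y0 = A \<or> y0 = B" by (rule charac[OF y0C wv xw wy0 w1 w2])
  have P0: "y0 \<in> C \<and> type3100 n y0 \<and> y0 n = 0 \<and> gdist n x y0 = 2"
    using y0AB y0C PA PB by auto
  have "\<exists>!y. y \<in> C \<and> type3100 n y \<and> y n = 0 \<and> gdist n x y = 2"
  proof (rule ex1I[of _ y0])
    show "y0 \<in> C \<and> type3100 n y0 \<and> y0 n = 0 \<and> gdist n x y0 = 2" by (rule P0)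
    fix y assume "y \<in> C \<and> type3100 n y \<and> y n = 0 \<and> gdist n x y = 2"
    then have yC: "y \<in> C" and yAB: "y = A \<or> y = B" using inAB by auto
    show "y = y0" using yAB y0AB yC y0C notboth by auto
  qed
  with xL2 show ?thesis by simp
qed

end

theorem mainTheorem11:
  fixes n \<rho> :: nat and C :: "(nat \<Rightarrow> int) set" and \<alpha> :: "nat \<Rightarrow> nat \<Rightarrow> nat"
  assumes "n \<ge> 2"
    and "CRC n C \<rho> \<alpha>"
    and "all_ones \<rho> \<alpha>"
    and "\<rho> \<ge> 2"
    and "\<alpha> 1 0 = 1"
    and "\<alpha> 2 1 = 3"
    and "(\<lambda>k. 0) \<in> C"
    and "(\<lambda>k. - unitv n k) \<in> C"
  shows "(\<forall>i \<in> {1..n}. \<forall>\<epsilon> \<in> {1, -1}. card (C \<inter> cap n i \<epsilon> \<inter> slice0 n) \<le> 1)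
       \<and> card {x \<in> C. type3100 n x \<and> x \<in> slice0 n} \<le> 2 * (n - 1)
       \<and> (\<forall>x. type1100 n x \<and> x n = 0 \<longrightarrow>
             x \<in> layer n C 2 \<and>
             (\<exists>!y. y \<in> C \<and> type3100 n y \<and> y n = 0 \<and> gdist n x y = 2))"
proof -
  interpret S n \<rho> C \<alpha> using assms by unfold_locales
  have p1: "\<forall>i \<in> {1..n}. \<forall>\<epsilon> \<in> {1, -1}. card (C \<inter> cap n i \<epsilon> \<inter> slice0 n) \<le> 1"
    using part1 by blast
  have p3: "\<forall>x. type1100 n x \<and> x n = 0 \<longrightarrow>
             x \<in> layer n C 2 \<and> (\<exists>!y. y \<in> C \<and> type3100 n y \<and> y n = 0 \<and> gdist n x y = 2)"
    using part2 by blast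
  show ?thesis using p1 part1b p3 by blast
qed



end
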